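(* On the six equivalence classes of type A faces $[F_{L_0}],[F_{L_1}],[F_{L_2}],[F_{L_3}],[F_{L_4}],[F_0]$, the relation $\Subset$ is exactly the reflexive–transitive closure of $F_{L_1}\Subset F_{L_0}$, $F_{L_2}\Subset F_{L_0}$, $F_{L_3}\Subset F_{L_1}$, $F_{L_3}\Subset F_{L_2}$, $F_{L_4}\Subset F_{L_2}$, $F_0\Subset F_{L_3}$, $F_0\Subset F_{L_4}$. In particular $F_{L_1},F_{L_2}$ are incomparable, $F_{L_3},F_{L_4}$ are incomparable, and $F_{L_4}\not\Subset F_{L_1}$.
   Context: $H_k\subseteq\mathbb R[x,y,z]$: real ternary forms of degree $k$; $P_{3,4}=\{f\in H_4: f\ge0\text{ on }\mathbb P^2(\mathbb R)\}$. $GL_3(\mathbb R)$ acts on forms by $(\sigma f)(a)=f(\sigma^{-1}a)$. For faces $F,G$ of $P_{3,4}$, $[F]\Subset[G]$ means there is $\sigma\in GL_3(\mathbb R)$ with $F\subseteq\sigma(G)$. For a real line $l'$ (identified with a defining linear form) and a projective linear subspace $U\subseteq\mathbb P^2(\mathbb R)$ (possibly empty), $F_{(l',U)}=\{l'^2g: g\in H_2,\ g\ge0\text{ on }\mathbb P^2(\mathbb R),\ g|_U=0\}$. Fix distinct real lines $l,k$, a point $p\in l$, and $q\in\mathbb P^2(\mathbb R)\setminus l$: $F_{L_0}=F_{(l,\emptyset)}$, $F_{L_1}=F_{(l,\{q\})}$, $F_{L_2}=F_{(l,\{p\})}$, $F_{L_3}=F_{(l,k)}$, $F_{L_4}=F_{(l,l)}$,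 $F_0=\{0\}$. *)

theory Defs
  imports "HOL-Analysis.Analysis"
begin

type_synonym form = "real^3 \<Rightarrow> real"

definition H :: "nat \<Rightarrow> form set" where
  "H k = {f. \<exists>c :: nat \<Rightarrow> nat \<Rightarrow> real.
      f = (\<lambda>a. \<Sum>i\<le>k. \<Sum>j\<le>k - i. c i j * (a$1)^i * (a$2)^j * (a$3)^(k - i - j))}"

definition act :: "real^3^3 \<Rightarrow> form \<Rightarrow> form" where
  "act \<sigma> f = (\<lambda>a. f (matrix_inv \<sigma> *v a))"

definition face_le :: "form set \<Rightarrow> form set \<Rightarrow> bool" where
  "face_le F G \<longleftrightarrow> (\<exists>\<sigma>. invertible \<sigma> \<and> F \<subseteq> act \<sigma> ` G)"

text \<open>F_(l',U): the line l' is given by its defining linear form a |-> l' . a;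
  the projective subspace U is given by its affine cone, a linear subspace of real^3
  (the empty projective subspace corresponds to {0}).\<close>
definition FlU :: "real^3 \<Rightarrow> (real^3) set \<Rightarrow> form set" where
  "FlU l' U = {f. \<exists>g \<in> H 2. (\<forall>a. g a \<ge> 0) \<and> (\<forall>a\<in>U. g a = 0)
                  \<and> f = (\<lambda>a. (l' \<bullet> a)^2 * g a)}"

text \<open>The six faces, indexed 0..5: F_{L_0},...,F_{L_4}, F_0.\<close>
definition typeA_face :: "real^3 \<Rightarrow> real^3 \<Rightarrow> real^3 \<Rightarrow> real^3 \<Rightarrow> nat \<Rightarrow> form set" where
  "typeA_face l k p q i =
     (if i = 0 then FlU l {0}
      else if i = 1 then FlU l (span {q})
      else if i = 2 then FlU l (span {p})
      else if i = 3 then FlU l {a. k \<bullet> a = 0}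
      else if i = 4 then FlU l {a. l \<bullet> a = 0}
      else {(\<lambda>a. 0)})"

text \<open>Generating relation on indices (i,j) meaning face i below face j.\<close>
definition typeA_gen :: "(nat \<times> nat) set" where
  "typeA_gen = {(1,0), (2,0), (3,1), (3,2), (4,2), (5,3), (5,4)}"

end

theory Submission
  imports Defs
begin
definition qf :: "form \<Rightarrow> bool" where
  "qf g \<longleftrightarrow> (\<exists>A::real^3^3. g = (\<lambda>a. a \<bullet> (A *v a)))"

lemma qf_expand: fixes a :: "real^3" shows "a \<bullet> ((A::real^3^3) *v a) =
   A$1$1*(a$1)^2 + A$2$2*(a$2)^2 + A$3$3*(a$3)^2 + (A$1$2+A$2$1)*a$1*a$2
   + (A$1$3+A$3$1)*a$1*a$3 + (A$2$3+A$3$2)*a$2*a$3"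
  by (simp add: inner_vec_def sum_3 matrix_vector_mult_def algebra_simps power2_eq_square)

lemma H2_expand: fixes a :: "real^3" shows "(\<Sum>i\<le>2. \<Sum>j\<le>2 - i. c i j * (a$1)^i * (a$2)^j * (a$3)^(2 - i - j)) =
  c 2 0 * (a$1)^2 + c 0 2 * (a$2)^2 + c 0 0 * (a$3)^2 + c 1 1 * a$1*a$2 + c 1 0 * a$1*a$3 + c 0 1 * a$2*a$3"
  by (simp add: numeral_2_eq_2 algebra_simps power2_eq_square)

lemma H2_iff: "g \<in> H 2 \<longleftrightarrow> qf g"
proof
  assume "g \<in> H 2"
  then obtain c where g: "g = (\<lambda>a. \<Sum>i\<le>2. \<Sum>j\<le>2 - i. c i j * (a$1)^i * (a$2)^j * (a$3)^(2 - i - j))"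
    unfolding H_def by blast
  define A :: "real^3^3" where "A = (\<chi> i j. if i = 1 \<and> j = 1 then c 2 0 else if i = 2 \<and> j = 2 then c 0 2
     else if i = 3 \<and> j = 3 then c 0 0 else if i = 1 \<and> j = 2 then c 1 1 else if i = 1 \<and> j = 3 then c 1 0
     else if i = 2 \<and> j = 3 then c 0 1 else 0)"
  have "g = (\<lambda>a. a \<bullet> (A *v a))"
    unfolding g H2_expand qf_expand by (rule ext) (simp add: A_def)
  then show "qf g" unfolding qf_def by blast
next
  assume "qf g"
  then obtain A :: "real^3^3" where g: "g = (\<lambda>a. a \<bullet> (A *v a))" unfolding qf_def by blast
  define c :: "nat \<Rightarrow> nat \<Rightarrow> real" where "c = (\<lambda>i j. if i = 2 \<and> j = 0 then A$1$1 else if i = 0 \<and> j = 2 then A$2$2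
     else if i = 0 \<and> j = 0 then A$3$3 else if i = 1 \<and> j = 1 then A$1$2+A$2$1 else if i = 1 \<and> j = 0 then A$1$3+A$3$1
     else A$2$3+A$3$2)"
  have "g = (\<lambda>a. \<Sum>i\<le>2. \<Sum>j\<le>2 - i. c i j * (a$1)^i * (a$2)^j * (a$3)^(2 - i - j))"
    unfolding g H2_expand qf_expand by (rule ext) (simp add: c_def)
  then show "g \<in> H 2" unfolding H_def by blast
qed

lemma inner_mv: "((M::real^3^3) *v a) \<bullet> y = a \<bullet> (transpose M *v y)"
  by (metis dot_lmul_matrix inner_commute transpose_matrix_vector)

lemma qf_comp: "qf g \<Longrightarrow> qf (\<lambda>a. g ((M::real^3^3) *v a))"
  unfolding qf_def
proof (elim exE)
  fix A :: "real^3^3" assume g: "g = (\<lambda>a. a \<bullet> (A *v a))"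
  have "\<And>a. (M *v a) \<bullet> (A *v (M *v a)) = a \<bullet> ((transpose M ** A ** M) *v a)"
    by (simp add: inner_mv matrix_vector_mul_assoc matrix_mul_assoc)
  then show "\<exists>B::real^3^3. (\<lambda>a. g (M *v a)) = (\<lambda>a. a \<bullet> (B *v a))" using g by auto
qed

lemma qf_add: "qf g \<Longrightarrow> qf h \<Longrightarrow> qf (\<lambda>a. g a + h a)"
  unfolding qf_def apply (elim exE)
  subgoal for A B by (rule exI[of _ "A + B"]) (simp add: matrix_vector_mult_add_rdistrib inner_add_right)
  done

lemma qf_scale: "qf g \<Longrightarrow> qf (\<lambda>a. c * g a)"
  unfolding qf_def apply (elim exE)
  subgoal for A by (rule exI[of _ "c *\<^sub>R A"]) (simp add: scaleR_matrix_vector_assoc[symmetric])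
  done

lemma qf_diff: "qf g \<Longrightarrow> qf h \<Longrightarrow> qf (\<lambda>a. g a - h a)"
  using qf_add[of g "\<lambda>a. (-1) * h a"] qf_scale[of h "-1"] by simp

lemma qf_zero: "qf (\<lambda>a. 0)"
  unfolding qf_def by (rule exI[of _ 0]) simp

lemma qf_sq: "qf (\<lambda>a. (m \<bullet> a)^2)"
  unfolding qf_def
  by (rule exI[of _ "\<chi> i j. m$i * m$j"]) (auto simp: inner_vec_def sum_3 matrix_vector_mult_def algebra_simps power2_eq_square)

lemma qf_norm: "qf (\<lambda>a. a \<bullet> a)"
  unfolding qf_def by (rule exI[of _ "mat 1"]) simp

lemma qf_par: "qf g \<Longrightarrow> g (x + y) + g (x - y) = 2 * g x + 2 * g y"
  unfolding qf_def by (auto simp: qf_expand algebra_simps power2_eq_square)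

lemma qf_hom: "qf g \<Longrightarrow> g (t *\<^sub>R x) = t^2 * g x"
  unfolding qf_def by (auto simp: qf_expand algebra_simps power2_eq_square)

lemma qf_ext:
  assumes "qf g1" "qf g2" "(m::real^3) \<noteq> 0" "\<And>a. m \<bullet> a \<noteq> 0 \<Longrightarrow> g1 a = g2 a"
  shows "g1 b = g2 b"
proof -
  let ?h = "\<lambda>a. g1 a - g2 a"
  have h: "qf ?h" using assms qf_diff by blast
  show ?thesis
  proof (cases "m \<bullet> b = 0")
    case True
    have mm: "m \<bullet> m \<noteq> 0" using assms(3) by simp
    have "?h (b + m) = 0" "?h (b - m) = 0" "?h m = 0"
      using assms(4)[of "b+m"] assms(4)[of "b-m"] assms(4)[of m] True mm
      by (auto simp: inner_add_right inner_diff_right)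
    with qf_par[OF h, of b m] show ?thesis by simp
  qed (use assms in auto)
qed

lemma orth:
  assumes "(m::real^3) \<noteq> 0" "\<And>a. m \<bullet> a = 0 \<Longrightarrow> l \<bullet> a = 0"
  shows "\<exists>c. l = c *\<^sub>R m"
proof -
  define c where "c = (l \<bullet> m) / (m \<bullet> m)"
  have mm: "m \<bullet> m \<noteq> 0" using assms(1) by simp
  have "m \<bullet> (l - c *\<^sub>R m) = 0" using mm by (simp add: c_def inner_diff_right inner_commute)
  then have 1: "l \<bullet> (l - c *\<^sub>R m) = 0" using assms(2) by blast
  have "(l - c *\<^sub>R m) \<bullet> (l - c *\<^sub>R m) = l \<bullet> (l - c *\<^sub>R m) - c * (m \<bullet> (l - c *\<^sub>R m))"
    by (simp add: inner_diff_left)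
  also have "\<dots> = 0" using 1 \<open>m \<bullet> (l - c *\<^sub>R m) = 0\<close> by simp
  finally have "l - c *\<^sub>R m = 0" by simp
  then show ?thesis by auto
qed

lemma minv: "invertible (A::real^3^3) \<Longrightarrow> A ** matrix_inv A = mat 1 \<and> matrix_inv A ** A = mat 1"
  unfolding invertible_def matrix_inv_def by (rule someI_ex)

lemma minv_unique: "(A::real^3^3) ** B = mat 1 \<Longrightarrow> B ** A = mat 1 \<Longrightarrow> matrix_inv A = B"
proof -
  assume 1: "A ** B = mat 1" and 2: "B ** A = mat 1"
  then have "invertible A" unfolding invertible_def by blast
  then have 3: "matrix_inv A ** A = mat 1" using minv by blast
  have "matrix_inv A = matrix_inv A ** (A ** B)" using 1 by simp
  also have "\<dots> = B" using 3 by (simp add: matrix_mul_assoc)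
  finally show ?thesis .
qed

lemma face_le_iff: "face_le F G \<longleftrightarrow> (\<exists>\<tau>::real^3^3. invertible \<tau> \<and> (\<forall>f\<in>F. \<exists>g\<in>G. f = (\<lambda>a. g (\<tau> *v a))))"
proof
  assume "face_le F G"
  then obtain \<sigma> where s: "invertible \<sigma>" "F \<subseteq> act \<sigma> ` G" unfolding face_le_def by blast
  have "invertible (matrix_inv \<sigma>)" using minv[OF s(1)] unfolding invertible_def by blast
  moreover have "\<forall>f\<in>F. \<exists>g\<in>G. f = (\<lambda>a. g (matrix_inv \<sigma> *v a))"
    using s(2) unfolding act_def by blast
  ultimately show "\<exists>\<tau>::real^3^3. invertible \<tau> \<and> (\<forall>f\<in>F. \<exists>g\<in>G. f = (\<lambda>a. g (\<tau> *v a)))" by blast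
next
  assume "\<exists>\<tau>::real^3^3. invertible \<tau> \<and> (\<forall>f\<in>F. \<exists>g\<in>G. f = (\<lambda>a. g (\<tau> *v a)))"
  then obtain \<tau> :: "real^3^3" where t: "invertible \<tau>" "\<forall>f\<in>F. \<exists>g\<in>G. f = (\<lambda>a. g (\<tau> *v a))" by blast
  have m: "\<tau> ** matrix_inv \<tau> = mat 1" "matrix_inv \<tau> ** \<tau> = mat 1" using minv[OF t(1)] by auto
  have "matrix_inv (matrix_inv \<tau>) = \<tau>" using minv_unique m by blast
  moreover have "invertible (matrix_inv \<tau>)" using m unfolding invertible_def by blast
  moreover have "F \<subseteq> act (matrix_inv \<tau>) ` G"
  proof
    fix f assume "f \<in> F"
    then obtain g where "g \<in> G" "f = (\<lambda>a. g (\<tau> *v a))" using t(2) by blast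
    then show "f \<in> act (matrix_inv \<tau>) ` G" unfolding act_def using \<open>matrix_inv (matrix_inv \<tau>) = \<tau>\<close> by auto
  qed
  ultimately show "face_le F G" unfolding face_le_def by blast
qed

lemma face_le_trans: "face_le F G \<Longrightarrow> face_le G K \<Longrightarrow> face_le F K"
  unfolding face_le_iff
proof (elim exE conjE)
  fix \<tau>1 \<tau>2 :: "real^3^3"
  assume 1: "invertible \<tau>1" "\<forall>f\<in>F. \<exists>g\<in>G. f = (\<lambda>a. g (\<tau>1 *v a))"
    and 2: "invertible \<tau>2" "\<forall>f\<in>G. \<exists>g\<in>K. f = (\<lambda>a. g (\<tau>2 *v a))"
  have "invertible (\<tau>2 ** \<tau>1)" using 1 2 invertible_mult by blast
  moreover have "\<forall>f\<in>F. \<exists>g\<in>K. f = (\<lambda>a. g ((\<tau>2 ** \<tau>1) *v a))"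
  proof
    fix f assume "f \<in> F"
    then obtain g where g: "g \<in> G" "f = (\<lambda>a. g (\<tau>1 *v a))" using 1(2) by blast
    then obtain h where h: "h \<in> K" "g = (\<lambda>a. h (\<tau>2 *v a))" using 2(2) by blast
    show "\<exists>g\<in>K. f = (\<lambda>a. g ((\<tau>2 ** \<tau>1) *v a))"
      using g h by (auto simp: matrix_vector_mul_assoc[symmetric])
  qed
  ultimately show "\<exists>\<tau>::real^3^3. invertible \<tau> \<and> (\<forall>f\<in>F. \<exists>g\<in>K. f = (\<lambda>a. g (\<tau> *v a)))" by blast
qed

lemma face_le_refl: "face_le F F"
  unfolding face_le_iff by (rule exI[of _ "mat 1"]) (auto simp: invertible_def)

lemma face_le_sub: "F \<subseteq> G \<Longrightarrow> face_le F G"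
  unfolding face_le_iff by (rule exI[of _ "mat 1"]) (auto simp: invertible_def)

lemma span1: "v \<in> span {q::real^3} \<Longrightarrow> \<exists>t. v = t *\<^sub>R q"
  by (auto simp: span_singleton)

lemma ttrans_inj: "invertible (\<tau>::real^3^3) \<Longrightarrow> transpose \<tau> *v x = transpose \<tau> *v y \<Longrightarrow> x = y"
  using inj_matrix_vector_mult[OF transpose_invertible] by (meson injD)

lemma tsurj: "invertible (\<tau>::real^3^3) \<Longrightarrow> \<tau> *v (matrix_inv \<tau> *v b) = b"
  using minv by (simp add: matrix_vector_mul_assoc)

lemma coll: "cross3 x y = 0 \<Longrightarrow> x \<noteq> 0 \<Longrightarrow> \<exists>c. y = c *\<^sub>R x"
  using cross_eq_0 collinear_lemma by (metis scale_zero_left)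

lemma cross_sq: "cross3 q a \<bullet> cross3 q a = (q \<bullet> q) * (a \<bullet> a) - (q \<bullet> a)^2"
  using norm_cross_dot[of q a] by (simp add: power2_norm_eq_inner[symmetric] power_mult_distrib)

lemma neg_setup:
  assumes "face_le F (FlU l V)" "(l::real^3) \<noteq> 0"
  shows "\<exists>\<tau>::real^3^3. invertible \<tau> \<and> transpose \<tau> *v l \<noteq> 0 \<and>
    (\<forall>f\<in>F. \<exists>g'. qf g' \<and> (\<forall>a. g' a \<ge> 0) \<and> (\<forall>a. \<tau> *v a \<in> V \<longrightarrow> g' a = 0)
        \<and> f = (\<lambda>a. ((transpose \<tau> *v l) \<bullet> a)^2 * g' a))"
proof -
  obtain \<tau> :: "real^3^3" where t: "invertible \<tau>" "\<forall>f\<in>F. \<exists>g\<in>FlU l V. f = (\<lambda>a. g (\<tau> *v a))"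
    using assms(1) unfolding face_le_iff by blast
  have "transpose \<tau> *v l \<noteq> 0"
    using ttrans_inj[OF t(1), of l 0] assms(2) by auto
  moreover have "\<forall>f\<in>F. \<exists>g'. qf g' \<and> (\<forall>a. g' a \<ge> 0) \<and> (\<forall>a. \<tau> *v a \<in> V \<longrightarrow> g' a = 0)
        \<and> f = (\<lambda>a. ((transpose \<tau> *v l) \<bullet> a)^2 * g' a)"
  proof
    fix f assume "f \<in> F"
    then obtain g0 where g0: "g0 \<in> FlU l V" "f = (\<lambda>a. g0 (\<tau> *v a))" using t(2) by blast
    then obtain g where g: "g \<in> H 2" "\<forall>a. g a \<ge> 0" "\<forall>a\<in>V. g a = 0" "g0 = (\<lambda>a. (l \<bullet> a)^2 * g a)"
      unfolding FlU_def by blast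
    have "qf (\<lambda>a. g (\<tau> *v a))" using g(1) H2_iff qf_comp by blast
    moreover have "f = (\<lambda>a. ((transpose \<tau> *v l) \<bullet> a)^2 * g (\<tau> *v a))"
    proof -
      have "\<And>a. l \<bullet> (\<tau> *v a) = (transpose \<tau> *v l) \<bullet> a" by (metis inner_mv inner_commute)
      then show ?thesis using g0(2) g(4) by simp
    qed
    ultimately show "\<exists>g'. qf g' \<and> (\<forall>a. g' a \<ge> 0) \<and> (\<forall>a. \<tau> *v a \<in> V \<longrightarrow> g' a = 0)
        \<and> f = (\<lambda>a. ((transpose \<tau> *v l) \<bullet> a)^2 * g' a)"
      using g(2,3) by (intro exI[of _ "\<lambda>a. g (\<tau> *v a)"]) auto
  qed
  ultimately show ?thesis using t(1) by blast
qed

lemma inFlU: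
  assumes "qf g" "\<forall>a. g a \<ge> 0" "\<forall>a\<in>U. g a = 0"
  shows "(\<lambda>a. (l \<bullet> a)^2 * g a) \<in> FlU l U"
  using assms H2_iff unfolding FlU_def by blast

definition shear :: "real^3 \<Rightarrow> real^3 \<Rightarrow> real^3^3" where
  "shear u v = mat 1 + (\<chi> i j. u$i * v$j)"

lemma shear_mv: "shear u v *v b = b + (v \<bullet> b) *\<^sub>R u"
  unfolding shear_def
  by (simp add: matrix_vector_mult_add_rdistrib vec_eq_iff matrix_vector_mult_def inner_vec_def sum_3 algebra_simps mat_def forall_3)

lemma shear_inv: "v \<bullet> u = 0 \<Longrightarrow> shear u v *v (shear (-u) v *v b) = b"
  by (simp add: shear_mv inner_add_right algebra_simps)

lemma move:
  assumes "cross3 x y \<noteq> 0" "l \<bullet> x = l \<bullet> y"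
  shows "\<exists>\<tau> \<sigma>::real^3^3. invertible \<tau> \<and> (\<forall>b. \<sigma> *v (\<tau> *v b) = b) \<and> \<sigma> *v x = y \<and> (\<forall>b. l \<bullet> (\<tau> *v b) = l \<bullet> b)"
proof -
  define D where "D = (x \<bullet> x) * (y \<bullet> y) - (x \<bullet> y)^2"
  have "cross3 x y \<bullet> cross3 x y \<noteq> 0" using assms(1) by simp
  then have D: "D \<noteq> 0" using cross_sq[of x y] unfolding D_def by simp
  define v where "v = ((y \<bullet> y - x \<bullet> y) / D) *\<^sub>R x + ((x \<bullet> x - x \<bullet> y) / D) *\<^sub>R y"
  have vx: "v \<bullet> x = 1"
  proof -
    have "v \<bullet> x = ((y \<bullet> y - x \<bullet> y)*(x \<bullet> x) + (x \<bullet> x - x \<bullet> y)*(x \<bullet> y))/D"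
      unfolding v_def by (simp add: inner_add_left inner_commute[of y x] add_divide_distrib)
    also have "\<dots> = D/D" unfolding D_def by (simp add: algebra_simps power2_eq_square)
    finally show ?thesis using D by simp
  qed
  have vy: "v \<bullet> y = 1"
  proof -
    have "v \<bullet> y = ((y \<bullet> y - x \<bullet> y)*(x \<bullet> y) + (x \<bullet> x - x \<bullet> y)*(y \<bullet> y))/D"
      unfolding v_def by (simp add: inner_add_left inner_commute[of y x] add_divide_distrib)
    also have "\<dots> = D/D" unfolding D_def by (simp add: algebra_simps power2_eq_square)
    finally show ?thesis using D by simp
  qed
  define u where "u = y - x"
  have vu: "v \<bullet> u = 0" "v \<bullet> (-u) = 0" using vx vy by (auto simp: u_def inner_diff_right)
  have lu: "l \<bullet> u = 0" using assms(2) by (simp add: u_def inner_diff_right)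
  have "shear (-u) v ** shear u v = mat 1"
    unfolding matrix_eq using shear_inv[OF vu(2)] by (simp add: matrix_vector_mul_assoc[symmetric])
  moreover have "shear u v ** shear (-u) v = mat 1"
    unfolding matrix_eq using shear_inv[OF vu(1)] by (simp add: matrix_vector_mul_assoc[symmetric])
  ultimately have "invertible (shear (-u) v)" unfolding invertible_def by blast
  moreover have "\<forall>b. shear u v *v (shear (-u) v *v b) = b" using shear_inv[OF vu(1)] by blast
  moreover have "shear u v *v x = y" by (simp add: shear_mv vx u_def)
  moreover have "\<forall>b. l \<bullet> (shear (-u) v *v b) = l \<bullet> b" by (simp add: shear_mv inner_add_right inner_diff_right lu)
  ultimately show ?thesis by blast
qed

lemma pos_face:
  assumes "invertible (\<tau>::real^3^3)" "\<forall>b. \<sigma> *v (\<tau> *v b) = b" "\<forall>b. l \<bullet> (\<tau> *v b) = l \<bullet> b"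
    "\<forall>v\<in>V. \<sigma> *v v \<in> U"
  shows "face_le (FlU l U) (FlU l V)"
  unfolding face_le_iff
proof (intro exI conjI ballI)
  show "invertible \<tau>" by fact
  fix f assume "f \<in> FlU l U"
  then obtain g where g: "g \<in> H 2" "\<forall>a. g a \<ge> 0" "\<forall>a\<in>U. g a = 0" "f = (\<lambda>a. (l \<bullet> a)^2 * g a)"
    unfolding FlU_def by blast
  have "(\<lambda>b. (l \<bullet> b)^2 * g (\<sigma> *v b)) \<in> FlU l V"
    using g assms(4) by (intro inFlU qf_comp) (auto simp: H2_iff)
  moreover have "f = (\<lambda>a. (\<lambda>b. (l \<bullet> b)^2 * g (\<sigma> *v b)) (\<tau> *v a))"
    using g(4) assms(2,3) by simp
  ultimately show "\<exists>g\<in>FlU l V. f = (\<lambda>a. g (\<tau> *v a))" by (intro bexI[of _ "\<lambda>b. (l \<bullet> b)^2 * g (\<sigma> *v b)"]) simp_all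
qed

lemma FlU_mono: "V \<subseteq> U \<Longrightarrow> FlU l U \<subseteq> FlU l V"
  unfolding FlU_def by blast

lemma zero_in: "(\<lambda>a. 0) \<in> FlU l U"
  using inFlU[OF qf_zero, of U l] by simp

lemma ltau: "l \<bullet> ((\<tau>::real^3^3) *v a) = (transpose \<tau> *v l) \<bullet> a"
  by (metis inner_mv inner_commute)

lemma union_planes:
  assumes "\<forall>a::real^3. m \<bullet> a = 0 \<longrightarrow> l \<bullet> a = 0 \<or> k \<bullet> a = 0"
  shows "(\<forall>a. m \<bullet> a = 0 \<longrightarrow> l \<bullet> a = 0) \<or> (\<forall>a. m \<bullet> a = 0 \<longrightarrow> k \<bullet> a = 0)"
proof (rule ccontr)
  assume "\<not> ?thesis"
  then obtain x y where x: "m \<bullet> x = 0" "l \<bullet> x \<noteq> 0" and y: "m \<bullet> y = 0" "k \<bullet> y \<noteq> 0" by blast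
  have "k \<bullet> x = 0" "l \<bullet> y = 0" using assms x y by blast+
  moreover have "m \<bullet> (x + y) = 0" using x y by (simp add: inner_add_right)
  ultimately show False using assms x y by (auto simp: inner_add_right dest!: spec[of _ "x+y"])
qed

lemma sq_fact:
  assumes "qf g" "l' \<noteq> 0" "\<forall>a. l' \<bullet> a = 0 \<longrightarrow> g a = 0"
    "\<forall>a. (l' \<bullet> a)^2 * g a = (m \<bullet> a)^2 * (n \<bullet> a)^2" "m = c *\<^sub>R l'" "c \<noteq> 0"
  shows "\<exists>d. n = d *\<^sub>R (l'::real^3)"
proof (rule orth[OF assms(2)])
  have e: "g b = c^2 * (n \<bullet> b)^2" for b
  proof (rule qf_ext[OF assms(1) qf_scale[OF qf_sq] assms(2)])
    fix a assume "l' \<bullet> a \<noteq> 0"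
    moreover have "(l' \<bullet> a)^2 * g a = (l' \<bullet> a)^2 * (c^2 * (n \<bullet> a)^2)"
      using assms(4,5) by (simp add: power_mult_distrib)
    ultimately show "g a = c^2 * (n \<bullet> a)^2" by simp
  qed
  fix a assume "l' \<bullet> a = 0"
  then have "c^2 * (n \<bullet> a)^2 = 0" using assms(3) e by metis
  then show "n \<bullet> a = 0" using assms(6) by simp
qed

lemma nonpar: "(l::real^3) \<noteq> 0 \<Longrightarrow> l = c *\<^sub>R k \<Longrightarrow> \<not> (\<exists>c. k = c *\<^sub>R l) \<Longrightarrow> False"
proof -
  assume a: "l \<noteq> 0" "l = c *\<^sub>R k" "\<not> (\<exists>c. k = c *\<^sub>R l)"
  then have "c \<noteq> 0" by auto
  then have "k = (1/c) *\<^sub>R l" using a(2) by simp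
  then show False using a(3) by blast
qed

lemma pos31:
  assumes "\<not> (\<exists>c. k = c *\<^sub>R l)" "l \<bullet> q \<noteq> 0" "k \<noteq> 0" "l \<noteq> 0"
  shows "face_le (FlU l {a. k \<bullet> a = 0}) (FlU l (span {q}))"
proof -
  define r0 where "r0 = (k \<bullet> k) *\<^sub>R l - (l \<bullet> k) *\<^sub>R k"
  have kk: "k \<bullet> k \<noteq> 0" using assms(3) by simp
  have kr0: "k \<bullet> r0 = 0" by (simp add: r0_def inner_diff_right inner_commute)
  have r0: "r0 \<noteq> 0"
  proof
    assume "r0 = 0"
    then have "(k \<bullet> k) *\<^sub>R l = (l \<bullet> k) *\<^sub>R k" by (simp add: r0_def)
    then have "(1 / (k \<bullet> k)) *\<^sub>R ((k \<bullet> k) *\<^sub>R l) = (1 / (k \<bullet> k)) *\<^sub>R ((l \<bullet> k) *\<^sub>R k)" by simp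
    then have "l = ((l \<bullet> k) / (k \<bullet> k)) *\<^sub>R k" using kk by simp
    then show False using assms(1,4) nonpar by blast
  qed
  have "r0 \<bullet> r0 = (k \<bullet> k) * (l \<bullet> r0)"
    by (simp add: r0_def inner_diff_left inner_diff_right inner_commute algebra_simps)
  then have lr0: "l \<bullet> r0 \<noteq> 0" using r0 by auto
  define r where "r = ((l \<bullet> q) / (l \<bullet> r0)) *\<^sub>R r0"
  have kr: "k \<bullet> r = 0" by (simp add: r_def kr0)
  have lr: "l \<bullet> r = l \<bullet> q" using lr0 by (simp add: r_def)
  have q0: "q \<noteq> 0" using assms(2) by auto
  show ?thesis
  proof (cases "cross3 q r = 0")
    case True
    then obtain c where c: "r = c *\<^sub>R q" using coll q0 by blast
    then have "c = 1" using lr assms(2) by simp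
    then have "k \<bullet> q = 0" using c kr by simp
    then show ?thesis
      by (intro pos_face[of "mat 1" "mat 1"]) (auto simp: invertible_def span_singleton)
  next
    case False
    then obtain \<tau> \<sigma> :: "real^3^3" where t: "invertible \<tau>" "\<forall>b. \<sigma> *v (\<tau> *v b) = b" "\<sigma> *v q = r"
        "\<forall>b. l \<bullet> (\<tau> *v b) = l \<bullet> b"
      using move[OF False lr[symmetric]] by blast
    show ?thesis
      using t kr by (intro pos_face[of \<tau> \<sigma>]) (auto simp: span_singleton matrix_vector_mult_scaleR)
  qed
qed


lemma pos32:
  assumes "\<not> (\<exists>c. k = c *\<^sub>R l)" "p \<noteq> 0" "l \<bullet> p = 0" "k \<noteq> 0" "l \<noteq> 0"
  shows "face_le (FlU l {a. k \<bullet> a = 0}) (FlU l (span {p}))"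
proof -
  define r where "r = cross3 l k"
  have kr: "k \<bullet> r = 0" and lr: "l \<bullet> r = 0" unfolding r_def using dot_cross_self by auto
  have r0: "r \<noteq> 0"
  proof
    assume "r = 0"
    then obtain c where "k = c *\<^sub>R l" using coll assms(5) unfolding r_def by blast
    then show False using assms(1) by blast
  qed
  show ?thesis
  proof (cases "cross3 p r = 0")
    case True
    then obtain c where c: "r = c *\<^sub>R p" using coll assms(2) by blast
    then have "c \<noteq> 0" using r0 by auto
    then have "k \<bullet> p = 0" using c kr by simp
    then show ?thesis
      by (intro pos_face[of "mat 1" "mat 1"]) (auto simp: invertible_def span_singleton)
  next
    case False
    then obtain \<tau> \<sigma> :: "real^3^3" where t: "invertible \<tau>" "\<forall>b. \<sigma> *v (\<tau> *v b) = b" "\<sigma> *v p = r"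
        "\<forall>b. l \<bullet> (\<tau> *v b) = l \<bullet> b"
      using move[OF False] assms(3) lr by metis
    show ?thesis
      using t kr by (intro pos_face[of \<tau> \<sigma>]) (auto simp: span_singleton matrix_vector_mult_scaleR)
  qed
qed

lemma neg_zero:
  assumes "face_le F {\<lambda>a. 0}" "f \<in> F"
  shows "f = (\<lambda>a. 0)"
  using assms unfolding face_le_iff by auto

lemma neg35:
  assumes "\<not> (\<exists>c. k = c *\<^sub>R l)" "k \<noteq> 0" "l \<noteq> 0"
  shows "\<not> face_le (FlU l {a. k \<bullet> a = 0}) {\<lambda>a. 0}"
proof
  assume h: "face_le (FlU l {a. k \<bullet> a = 0}) {\<lambda>a. 0}"
  have "(\<lambda>a. (l \<bullet> a)^2 * (k \<bullet> a)^2) \<in> FlU l {a. k \<bullet> a = 0}"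
    by (rule inFlU[OF qf_sq]) auto
  from neg_zero[OF h this] have z: "\<And>a. (l \<bullet> a)^2 * (k \<bullet> a)^2 = 0" by metis
  show False
  proof (cases "l \<bullet> k = 0")
    case True
    then show False using z[of "l + k"] assms by (simp add: inner_add_right inner_commute)
  next
    case False
    then show False using z[of l] assms by (simp add: inner_commute)
  qed
qed

lemma neg45:
  assumes "l \<noteq> 0"
  shows "\<not> face_le (FlU l {a. l \<bullet> a = 0}) {\<lambda>a. 0}"
proof
  assume h: "face_le (FlU l {a. l \<bullet> a = 0}) {\<lambda>a. 0}"
  have "(\<lambda>a. (l \<bullet> a)^2 * (l \<bullet> a)^2) \<in> FlU l {a. l \<bullet> a = 0}"
    by (rule inFlU[OF qf_sq]) auto
  from neg_zero[OF h this] have z: "\<And>a. (l \<bullet> a)^2 * (l \<bullet> a)^2 = 0" by metis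
  show False using z[of l] assms by simp
qed

lemma neg34:
  assumes "\<not> (\<exists>c. k = c *\<^sub>R l)" "k \<noteq> 0" "l \<noteq> 0"
  shows "\<not> face_le (FlU l {a. k \<bullet> a = 0}) (FlU l {a. l \<bullet> a = 0})"
proof
  assume h: "face_le (FlU l {a. k \<bullet> a = 0}) (FlU l {a. l \<bullet> a = 0})"
  have f3: "(\<lambda>a. (l \<bullet> a)^2 * (k \<bullet> a)^2) \<in> FlU l {a. k \<bullet> a = 0}"
    by (rule inFlU[OF qf_sq]) auto
  obtain \<tau> :: "real^3^3" where t: "invertible \<tau>" "transpose \<tau> *v l \<noteq> 0"
    "\<forall>f\<in>FlU l {a. k \<bullet> a = 0}. \<exists>g'. qf g' \<and> (\<forall>a. g' a \<ge> 0) \<and> (\<forall>a. \<tau> *v a \<in> {a. l \<bullet> a = 0} \<longrightarrow> g' a = 0)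
        \<and> f = (\<lambda>a. ((transpose \<tau> *v l) \<bullet> a)^2 * g' a)"
    using neg_setup[OF h assms(3)] by blast
  define l' where "l' = transpose \<tau> *v l"
  obtain g' where g0: "qf g'" "\<forall>a. \<tau> *v a \<in> {a. l \<bullet> a = 0} \<longrightarrow> g' a = 0"
     "(\<lambda>a. (l \<bullet> a)^2 * (k \<bullet> a)^2) = (\<lambda>a. (l' \<bullet> a)^2 * g' a)"
    using t(3) f3 unfolding l'_def by blast
  have g: "qf g'" "\<forall>a. l' \<bullet> a = 0 \<longrightarrow> g' a = 0"
     "\<forall>a. (l \<bullet> a)^2 * (k \<bullet> a)^2 = (l' \<bullet> a)^2 * g' a"
    using g0 by (auto simp: ltau l'_def dest: fun_cong)
  have l'0: "l' \<noteq> 0" using t(2) l'_def by simp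
  have "\<forall>a. l' \<bullet> a = 0 \<longrightarrow> l \<bullet> a = 0 \<or> k \<bullet> a = 0"
  proof (intro allI impI)
    fix a assume "l' \<bullet> a = 0"
    then have "(l \<bullet> a)^2 * (k \<bullet> a)^2 = 0" using g(3) by simp
    then show "l \<bullet> a = 0 \<or> k \<bullet> a = 0" by simp
  qed
  from union_planes[OF this] show False
  proof
    assume "\<forall>a. l' \<bullet> a = 0 \<longrightarrow> l \<bullet> a = 0"
    then obtain c where c: "l = c *\<^sub>R l'" using orth l'0 by blast
    then have "c \<noteq> 0" using assms(3) by auto
    then obtain d where "k = d *\<^sub>R l'" using sq_fact[OF g(1) l'0 g(2) _ c] g(3) by metis
    then have "k = (d / c) *\<^sub>R l" using c \<open>c \<noteq> 0\<close> by simp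
    then show False using assms(1) by blast
  next
    assume "\<forall>a. l' \<bullet> a = 0 \<longrightarrow> k \<bullet> a = 0"
    then obtain c where c: "k = c *\<^sub>R l'" using orth l'0 by blast
    then have "c \<noteq> 0" using assms(2) by auto
    have "\<forall>a. (l' \<bullet> a)^2 * g' a = (k \<bullet> a)^2 * (l \<bullet> a)^2" using g(3) by (simp add: mult.commute)
    then obtain d where d: "l = d *\<^sub>R l'" using sq_fact[OF g(1) l'0 g(2) _ c \<open>c \<noteq> 0\<close>] by blast
    then have "d \<noteq> 0" using assms(3) by auto
    then have "k = (c / d) *\<^sub>R l" using c d by simp
    then show False using assms(1) by blast
  qed
qed


lemma neg43:
  assumes "\<not> (\<exists>c. k = c *\<^sub>R l)" "k \<noteq> 0" "l \<noteq> 0"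
  shows "\<not> face_le (FlU l {a. l \<bullet> a = 0}) (FlU l {a. k \<bullet> a = 0})"
proof
  assume h: "face_le (FlU l {a. l \<bullet> a = 0}) (FlU l {a. k \<bullet> a = 0})"
  have f4: "(\<lambda>a. (l \<bullet> a)^2 * (l \<bullet> a)^2) \<in> FlU l {a. l \<bullet> a = 0}"
    by (rule inFlU[OF qf_sq]) auto
  obtain \<tau> :: "real^3^3" where t: "invertible \<tau>" "transpose \<tau> *v l \<noteq> 0"
    "\<forall>f\<in>FlU l {a. l \<bullet> a = 0}. \<exists>g'. qf g' \<and> (\<forall>a. g' a \<ge> 0) \<and> (\<forall>a. \<tau> *v a \<in> {a. k \<bullet> a = 0} \<longrightarrow> g' a = 0)
        \<and> f = (\<lambda>a. ((transpose \<tau> *v l) \<bullet> a)^2 * g' a)"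
    using neg_setup[OF h assms(3)] by blast
  define l' where "l' = transpose \<tau> *v l"
  define k' where "k' = transpose \<tau> *v k"
  obtain g' where g0: "qf g'" "\<forall>a. \<tau> *v a \<in> {a. k \<bullet> a = 0} \<longrightarrow> g' a = 0"
     "(\<lambda>a. (l \<bullet> a)^2 * (l \<bullet> a)^2) = (\<lambda>a. (l' \<bullet> a)^2 * g' a)"
    using t(3) f4 unfolding l'_def by blast
  have g: "\<forall>a. k' \<bullet> a = 0 \<longrightarrow> g' a = 0"
     "\<forall>a. (l \<bullet> a)^2 * (l \<bullet> a)^2 = (l' \<bullet> a)^2 * g' a"
    using g0 by (auto simp: ltau k'_def dest: fun_cong)
  have l'0: "l' \<noteq> 0" using t(2) l'_def by simp
  have k'0: "k' \<noteq> 0" using ttrans_inj[OF t(1), of k 0] assms(2) k'_def by auto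
  have "\<forall>a. l' \<bullet> a = 0 \<longrightarrow> l \<bullet> a = 0"
  proof (intro allI impI)
    fix a assume "l' \<bullet> a = 0"
    then have "(l \<bullet> a)^2 * (l \<bullet> a)^2 = 0" using g(2) by simp
    then show "l \<bullet> a = 0" by simp
  qed
  then obtain c where c: "l = c *\<^sub>R l'" using orth l'0 by blast
  have "\<forall>a. k' \<bullet> a = 0 \<longrightarrow> l \<bullet> a = 0"
  proof (intro allI impI)
    fix a assume "k' \<bullet> a = 0"
    then have "(l \<bullet> a)^2 * (l \<bullet> a)^2 = 0" using g by simp
    then show "l \<bullet> a = 0" by simp
  qed
  then obtain d where d: "l = d *\<^sub>R k'" using orth k'0 by blast
  have "transpose \<tau> *v (c *\<^sub>R l) = c *\<^sub>R l'" unfolding l'_def by (simp only: matrix_vector_mult_scaleR)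
  also have "\<dots> = d *\<^sub>R k'" using c d by simp
  also have "\<dots> = transpose \<tau> *v (d *\<^sub>R k)" unfolding k'_def by (simp only: matrix_vector_mult_scaleR)
  finally have "transpose \<tau> *v (c *\<^sub>R l) = transpose \<tau> *v (d *\<^sub>R k)" .
  then have e: "c *\<^sub>R l = d *\<^sub>R k" using ttrans_inj[OF t(1)] by blast
  have "c \<noteq> 0" using c assms(3) by auto
  then have "d \<noteq> 0" using e assms(3) by auto
  have "k = (1/d) *\<^sub>R (d *\<^sub>R k)" using \<open>d \<noteq> 0\<close> by simp
  also have "\<dots> = (1/d) *\<^sub>R (c *\<^sub>R l)" using e by simp
  also have "\<dots> = (c / d) *\<^sub>R l" by simp
  finally have "k = (c / d) *\<^sub>R l" .
  then show False using assms(1) by blast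
qed

lemma neg41:
  assumes "l \<bullet> q \<noteq> 0" "l \<noteq> 0"
  shows "\<not> face_le (FlU l {a. l \<bullet> a = 0}) (FlU l (span {q}))"
proof
  assume h: "face_le (FlU l {a. l \<bullet> a = 0}) (FlU l (span {q}))"
  have f4: "(\<lambda>a. (l \<bullet> a)^2 * (l \<bullet> a)^2) \<in> FlU l {a. l \<bullet> a = 0}"
    by (rule inFlU[OF qf_sq]) auto
  obtain \<tau> :: "real^3^3" where t: "invertible \<tau>" "transpose \<tau> *v l \<noteq> 0"
    "\<forall>f\<in>FlU l {a. l \<bullet> a = 0}. \<exists>g'. qf g' \<and> (\<forall>a. g' a \<ge> 0) \<and> (\<forall>a. \<tau> *v a \<in> span {q} \<longrightarrow> g' a = 0)
        \<and> f = (\<lambda>a. ((transpose \<tau> *v l) \<bullet> a)^2 * g' a)"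
    using neg_setup[OF h assms(2)] by blast
  define l' where "l' = transpose \<tau> *v l"
  obtain g' where g0: "qf g'" "\<forall>a. \<tau> *v a \<in> span {q} \<longrightarrow> g' a = 0"
     "(\<lambda>a. (l \<bullet> a)^2 * (l \<bullet> a)^2) = (\<lambda>a. (l' \<bullet> a)^2 * g' a)"
    using t(3) f4 unfolding l'_def by blast
  have g: "\<forall>a. (l \<bullet> a)^2 * (l \<bullet> a)^2 = (l' \<bullet> a)^2 * g' a"
    using g0 by (auto dest: fun_cong)
  have l'0: "l' \<noteq> 0" using t(2) l'_def by simp
  have "\<forall>a. l' \<bullet> a = 0 \<longrightarrow> l \<bullet> a = 0"
  proof (intro allI impI)
    fix a assume "l' \<bullet> a = 0"
    then have "(l \<bullet> a)^2 * (l \<bullet> a)^2 = 0" using g by simp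
    then show "l \<bullet> a = 0" by simp
  qed
  then obtain c where c: "l = c *\<^sub>R l'" using orth l'0 by blast
  define a0 where "a0 = matrix_inv \<tau> *v q"
  have ta0: "\<tau> *v a0 = q" using tsurj[OF t(1)] a0_def by simp
  then have "g' a0 = 0" using g0(2) span_base[of q "{q}"] by auto
  then have "(l \<bullet> a0)^2 * (l \<bullet> a0)^2 = 0" using g by simp
  then have "l \<bullet> a0 = 0" by simp
  moreover have "l \<bullet> a0 = c * (l \<bullet> q)"
  proof -
    have "l \<bullet> a0 = c * (l' \<bullet> a0)" using c by (metis inner_scaleR_left)
    moreover have "l' \<bullet> a0 = l \<bullet> q" using ltau[of l \<tau> a0] ta0 unfolding l'_def by simp
    ultimately show ?thesis by simp
  qed
  ultimately show False using c assms by auto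
qed

lemma neg12:
  assumes "l \<bullet> q \<noteq> 0" "l \<noteq> 0" "p \<noteq> 0" "l \<bullet> p = 0"
  shows "\<not> face_le (FlU l (span {q})) (FlU l (span {p}))"
proof
  assume h: "face_le (FlU l (span {q})) (FlU l (span {p}))"
  have q0: "q \<noteq> 0" using assms(1) by auto
  define hh where "hh = (\<lambda>a. cross3 q a \<bullet> cross3 q a)"
  have hq: "qf hh"
  proof -
    have "hh = (\<lambda>a. (q \<bullet> q) * (a \<bullet> a) - (q \<bullet> a)^2)" unfolding hh_def by (simp add: cross_sq)
    then show ?thesis using qf_diff[OF qf_scale[OF qf_norm] qf_sq] by simp
  qed
  have hz: "hh a = 0 \<Longrightarrow> \<exists>t. a = t *\<^sub>R q" for a using coll[of q a] q0 unfolding hh_def by simp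
  have f1: "(\<lambda>a. (l \<bullet> a)^2 * hh a) \<in> FlU l (span {q})"
    by (rule inFlU[OF hq]) (auto simp: hh_def span_singleton cross_mult_right)
  obtain \<tau> :: "real^3^3" where t: "invertible \<tau>" "transpose \<tau> *v l \<noteq> 0"
    "\<forall>f\<in>FlU l (span {q}). \<exists>g'. qf g' \<and> (\<forall>a. g' a \<ge> 0) \<and> (\<forall>a. \<tau> *v a \<in> span {p} \<longrightarrow> g' a = 0)
        \<and> f = (\<lambda>a. ((transpose \<tau> *v l) \<bullet> a)^2 * g' a)"
    using neg_setup[OF h assms(2)] by blast
  define l' where "l' = transpose \<tau> *v l"
  obtain g' where g0: "qf g'" "\<forall>a. \<tau> *v a \<in> span {p} \<longrightarrow> g' a = 0"
     "(\<lambda>a. (l \<bullet> a)^2 * hh a) = (\<lambda>a. (l' \<bullet> a)^2 * g' a)"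
    using t(3) f1 unfolding l'_def by blast
  have g: "\<forall>a. (l \<bullet> a)^2 * hh a = (l' \<bullet> a)^2 * g' a"
    using g0 by (auto dest: fun_cong)
  have l'0: "l' \<noteq> 0" using t(2) l'_def by simp
  define a0 where "a0 = matrix_inv \<tau> *v p"
  have ta0: "\<tau> *v a0 = p" using tsurj[OF t(1)] a0_def by simp
  then have ga0: "g' a0 = 0" using g0(2) span_base[of p "{p}"] by auto
  have la0: "l' \<bullet> a0 = 0" using ta0 ltau[of l \<tau> a0] assms(4) unfolding l'_def by simp
  have a00: "a0 \<noteq> 0" using ta0 assms(3) by auto
  show False
  proof (cases "\<forall>a. l' \<bullet> a = 0 \<longrightarrow> l \<bullet> a = 0")
    case True
    then obtain c where c: "l = c *\<^sub>R l'" using orth l'0 by blast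
    then have c0: "c \<noteq> 0" using assms(2) by auto
    have e: "g' b = c^2 * hh b" for b
    proof (rule qf_ext[OF g0(1) qf_scale[OF hq] l'0])
      fix a assume "l' \<bullet> a \<noteq> 0"
      moreover have "(l \<bullet> a)^2 * hh a = (l' \<bullet> a)^2 * (c^2 * hh a)"
        using c by (simp add: power_mult_distrib)
      then have "(l' \<bullet> a)^2 * g' a = (l' \<bullet> a)^2 * (c^2 * hh a)"
        using g[rule_format, of a] by simp
      ultimately show "g' a = c^2 * hh a" by simp
    qed
    have "hh a0 = 0" using e[of a0] ga0 c0 by simp
    then obtain s where s: "a0 = s *\<^sub>R q" using hz by blast
    have "l \<bullet> a0 = 0" using c la0 by simp
    then have "s = 0" using s assms(1) by simp
    then show False using s a00 by simp
  next
    case False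
    then obtain x where x: "l' \<bullet> x = 0" "l \<bullet> x \<noteq> 0" by blast
    have hzero: "l' \<bullet> a = 0 \<Longrightarrow> l \<bullet> a \<noteq> 0 \<Longrightarrow> hh a = 0" for a
      using g[rule_format, of a] by simp
    define z where "z = cross3 l l'"
    have zl: "l \<bullet> z = 0" "l' \<bullet> z = 0" unfolding z_def using dot_cross_self by auto
    have z0: "z \<noteq> 0"
    proof
      assume "z = 0"
      then obtain c where cl: "l' = c *\<^sub>R l" using coll assms(2) unfolding z_def by blast
      then have "c * (l \<bullet> x) = 0" using x(1) by simp
      then have "c = 0" using x(2) by simp
      then show False using cl l'0 by simp
    qed
    obtain s where s: "x = s *\<^sub>R q" using hz hzero x by blast
    have "l' \<bullet> (x + z) = 0" "l \<bullet> (x + z) \<noteq> 0" using x zl by (auto simp: inner_add_right)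
    then obtain s' where s': "x + z = s' *\<^sub>R q" using hz hzero by blast
    have "z = (x + z) - x" by simp
    also have "\<dots> = s' *\<^sub>R q - s *\<^sub>R q" using s s' by simp
    also have "\<dots> = (s' - s) *\<^sub>R q" by (simp only: scaleR_diff_left)
    finally have zq: "z = (s' - s) *\<^sub>R q" .
    have "l \<bullet> z = (s' - s) * (l \<bullet> q)" unfolding zq by (simp only: inner_scaleR_right)
    then have "(s' - s) * (l \<bullet> q) = 0" using zl by simp
    then have "s' - s = 0" using assms(1) by simp
    then have "z = 0" unfolding zq by simp
    then show False using z0 by simp
  qed
qed


lemma gen_rtrancl: "(i, j) \<in> typeA_gen\<^sup>* \<longleftrightarrow> i = j \<or> (i, j) \<in> {(1,0),(2,0),(3,0),(3,1),(3,2),(4,0),(4,2),(5,0),(5,1),(5,2),(5,3),(5,4)}"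
proof
  assume "(i, j) \<in> typeA_gen\<^sup>*"
  then show "i = j \<or> (i, j) \<in> {(1,0),(2,0),(3,0),(3,1),(3,2),(4,0),(4,2),(5,0),(5,1),(5,2),(5,3),(5,4)}"
  proof (induction rule: rtrancl_induct)
    case base
    then show ?case by simp
  next
    case (step y z)
    from step(2) have "(y, z) \<in> {(1,0), (2,0), (3,1), (3,2), (4,2), (5,3), (5,4)}" by (simp add: typeA_gen_def)
    then show ?case using step(3) by (elim insertE emptyE; simp; blast)
  qed
next
  have e1: "(1,0) \<in> typeA_gen\<^sup>*" "(2,0) \<in> typeA_gen\<^sup>*" "(3,1) \<in> typeA_gen\<^sup>*" "(3,2) \<in> typeA_gen\<^sup>*"
    "(4,2) \<in> typeA_gen\<^sup>*" "(5,3) \<in> typeA_gen\<^sup>*" "(5,4) \<in> typeA_gen\<^sup>*"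
    by (rule r_into_rtrancl, simp add: typeA_gen_def)+
  have e2: "(3,0) \<in> typeA_gen\<^sup>*" using e1(3,1) by (rule rtrancl_trans)
  have e3: "(4,0) \<in> typeA_gen\<^sup>*" using e1(5,2) by (rule rtrancl_trans)
  have e4: "(5,0) \<in> typeA_gen\<^sup>*" using e1(6) e2 by (rule rtrancl_trans)
  have e5: "(5,1) \<in> typeA_gen\<^sup>*" using e1(6,3) by (rule rtrancl_trans)
  have e6: "(5,2) \<in> typeA_gen\<^sup>*" using e1(6,4) by (rule rtrancl_trans)
  assume "i = j \<or> (i, j) \<in> {(1,0),(2,0),(3,0),(3,1),(3,2),(4,0),(4,2),(5,0),(5,1),(5,2),(5,3),(5,4)}"
  then show "(i, j) \<in> typeA_gen\<^sup>*"
    using e1 e2 e3 e4 e5 e6 by auto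
qed

lemma neg_via_l: "face_le A B \<Longrightarrow> \<not> face_le A C \<Longrightarrow> \<not> face_le B C"
  using face_le_trans by blast

lemma neg_via_r: "face_le B C \<Longrightarrow> \<not> face_le A C \<Longrightarrow> \<not> face_le A B"
  using face_le_trans by blast

lemma final_combi:
  fixes T :: "nat \<Rightarrow> 'a" and R :: "'a \<Rightarrow> 'a \<Rightarrow> bool"
  assumes p10: "R (T 1) (T 0)" and p20: "R (T 2) (T 0)" and p30: "R (T 3) (T 0)" and p40: "R (T 4) (T 0)"
   and p42: "R (T 4) (T 2)" and p31: "R (T 3) (T 1)" and p32: "R (T 3) (T 2)" and p50: "R (T 5) (T 0)" and p51: "R (T 5) (T 1)" and p52: "R (T 5) (T 2)" and p53: "R (T 5) (T 3)" and p54: "R (T 5) (T 4)"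
   and n: "\<not> R (T 3) (T 5)" "\<not> R (T 4) (T 5)" "\<not> R (T 3) (T 4)" "\<not> R (T 4) (T 3)" "\<not> R (T 4) (T 1)" "\<not> R (T 1) (T 2)"
     "\<not> R (T 0) (T 5)" "\<not> R (T 1) (T 5)" "\<not> R (T 2) (T 5)" "\<not> R (T 0) (T 4)" "\<not> R (T 0) (T 3)" "\<not> R (T 1) (T 4)"
     "\<not> R (T 1) (T 3)" "\<not> R (T 2) (T 3)" "\<not> R (T 2) (T 4)" "\<not> R (T 2) (T 1)" "\<not> R (T 0) (T 1)" "\<not> R (T 0) (T 2)"
   and r: "\<And>i. R (T i) (T i)"
   and hi: "i = 0 \<or> i = 1 \<or> i = 2 \<or> i = 3 \<or> i = 4 \<or> i = (5::nat)" and hj: "j = 0 \<or> j = 1 \<or> j = 2 \<or> j = 3 \<or> j = 4 \<or> j = (5::nat)"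
  shows "R (T i) (T j) = (i = j \<or> (i, j) \<in> {(1,0),(2,0),(3,0),(3,1),(3,2),(4,0),(4,2),(5,0),(5,1),(5,2),(5,3),(5,4)})"
  using hi hj by (elim disjE) (simp_all add: p10 p20 p30 p40 p42 p31 p32 p50 p51 p52 p53 p54 n r p10[unfolded One_nat_def] p51[unfolded One_nat_def] p31[unfolded One_nat_def] n[unfolded One_nat_def])

theorem mainTheorem19:
  fixes l k p q :: "real^3"
  assumes "l \<noteq> 0" and "k \<noteq> 0" and "\<not> (\<exists>c. k = c *\<^sub>R l)"
    and "p \<noteq> 0" and "l \<bullet> p = 0"
    and "l \<bullet> q \<noteq> 0"
  shows "\<forall>i<6. \<forall>j<6.
           face_le (typeA_face l k p q i) (typeA_face l k p q j) \<longleftrightarrow> (i, j) \<in> typeA_gen\<^sup>*"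
proof -
  define T where "T = typeA_face l k p q"
  have T: "T 0 = FlU l {0}" "T 1 = FlU l (span {q})" "T 2 = FlU l (span {p})"
    "T 3 = FlU l {a. k \<bullet> a = 0}" "T 4 = FlU l {a. l \<bullet> a = 0}" "T 5 = {\<lambda>a. 0}"
    unfolding T_def typeA_face_def by simp_all
  have p10: "face_le (T 1) (T 0)" unfolding T by (intro face_le_sub FlU_mono) (simp add: span_zero)
  have p20: "face_le (T 2) (T 0)" unfolding T by (intro face_le_sub FlU_mono) (simp add: span_zero)
  have p30: "face_le (T 3) (T 0)" unfolding T by (intro face_le_sub FlU_mono) simp
  have p40: "face_le (T 4) (T 0)" unfolding T by (intro face_le_sub FlU_mono) simp
  have p42: "face_le (T 4) (T 2)" unfolding T
  proof (intro face_le_sub FlU_mono subsetI)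
    fix v assume "v \<in> span {p}"
    then obtain t where "v = t *\<^sub>R p" using span1 by blast
    then show "v \<in> {a. l \<bullet> a = 0}" using assms(5) by simp
  qed
  have p31: "face_le (T 3) (T 1)" unfolding T by (rule pos31[OF assms(3) assms(6) assms(2) assms(1)])
  have p32: "face_le (T 3) (T 2)" unfolding T by (rule pos32[OF assms(3) assms(4) assms(5) assms(2) assms(1)])
  have p50: "face_le (T 5) (T 0)" unfolding T by (intro face_le_sub) (simp add: zero_in)
  have p51: "face_le (T 5) (T 1)" unfolding T by (intro face_le_sub) (simp add: zero_in)
  have p52: "face_le (T 5) (T 2)" unfolding T by (intro face_le_sub) (simp add: zero_in)
  have p53: "face_le (T 5) (T 3)" unfolding T by (intro face_le_sub) (simp add: zero_in)
  have p54: "face_le (T 5) (T 4)" unfolding T by (intro face_le_sub) (simp add: zero_in)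
  have n35: "\<not> face_le (T 3) (T 5)" unfolding T by (rule neg35[OF assms(3) assms(2) assms(1)])
  have n45: "\<not> face_le (T 4) (T 5)" unfolding T by (rule neg45[OF assms(1)])
  have n34: "\<not> face_le (T 3) (T 4)" unfolding T by (rule neg34[OF assms(3) assms(2) assms(1)])
  have n43: "\<not> face_le (T 4) (T 3)" unfolding T by (rule neg43[OF assms(3) assms(2) assms(1)])
  have n41: "\<not> face_le (T 4) (T 1)" unfolding T by (rule neg41[OF assms(6) assms(1)])
  have n12: "\<not> face_le (T 1) (T 2)" unfolding T by (rule neg12[OF assms(6) assms(1) assms(4) assms(5)])
  have n05: "\<not> face_le (T 0) (T 5)" using neg_via_l[OF p30 n35] .
  have n15: "\<not> face_le (T 1) (T 5)" using neg_via_l[OF p31 n35] .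
  have n25: "\<not> face_le (T 2) (T 5)" using neg_via_l[OF p32 n35] .
  have n04: "\<not> face_le (T 0) (T 4)" using neg_via_l[OF p30 n34] .
  have n03: "\<not> face_le (T 0) (T 3)" using neg_via_l[OF p40 n43] .
  have n14: "\<not> face_le (T 1) (T 4)" using neg_via_l[OF p31 n34] .
  have n13: "\<not> face_le (T 1) (T 3)" using neg_via_r[OF p32 n12] .
  have n23: "\<not> face_le (T 2) (T 3)" using neg_via_l[OF p42 n43] .
  have n24: "\<not> face_le (T 2) (T 4)" using neg_via_l[OF p32 n34] .
  have n21: "\<not> face_le (T 2) (T 1)" using neg_via_l[OF p42 n41] .
  have n01: "\<not> face_le (T 0) (T 1)" using neg_via_l[OF p20 n21] .
  have n02: "\<not> face_le (T 0) (T 2)" using neg_via_l[OF p10 n12] .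
  have r: "face_le (T i) (T i)" for i by (rule face_le_refl)
  have six: "i < 6 \<Longrightarrow> i = 0 \<or> i = 1 \<or> i = 2 \<or> i = 3 \<or> i = 4 \<or> i = (5::nat)" for i by auto
  show ?thesis
    unfolding T_def[symmetric] gen_rtrancl
  proof (intro allI impI)
    fix i j :: nat assume "i < 6" "j < 6"
    then have hi: "i = 0 \<or> i = 1 \<or> i = 2 \<or> i = 3 \<or> i = 4 \<or> i = 5" and hj: "j = 0 \<or> j = 1 \<or> j = 2 \<or> j = 3 \<or> j = 4 \<or> j = 5"
      using six by blast+
    show "face_le (T i) (T j) = (i = j \<or> (i, j) \<in> {(1,0),(2,0),(3,0),(3,1),(3,2),(4,0),(4,2),(5,0),(5,1),(5,2),(5,3),(5,4)})"
      by (rule final_combi[of face_le T, OF p10 p20 p30 p40 p42 p31 p32 p50 p51 p52 p53 p54 n35 n45 n34 n43 n41 n12 n05 n15 n25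
        n04 n03 n14 n13 n23 n24 n21 n01 n02 r hi hj])
  qed
qed

end
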